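(* Let $A=\mathrm{diag}(G_1,\dots,G_m,[1])\in\mathbb{R}^{n\times n}$, $m\geq 1$, where the trailing block $[1]$ may or may not be present, with $G_j=\begin{bmatrix}c_j&s_j\\-s_j&c_j\end{bmatrix}$, $c_j^2+s_j^2=1$, $s_j\neq 0$, and $0<c_1<c_2<\cdots<c_m<1$. Let $v_0\in\mathbb{R}^n$ be a unit norm vector with $d(A,v_0)\geq 2$ and $v_0^{(1)}\neq 0$. Then the sequence $\{v_k\}$ of the iteration ACI($1$) below converges to a single limit vector.
   Context: Block partitioning: every $v\in\mathbb{R}^n$ is written as $v=[v^{(1)};\dots;v^{(m)};v^{(m+1)}]$ with $v^{(j)}\in\mathbb{R}^2$ for $j=1,\dots,m$ (conforming with the blocks $G_j$) and $v^{(m+1)}\in\mathbb{R}$ (present only if the block $[1]$ is present). ACI($1$): for $k=0,1,2,\dots$: $\widetilde w_k=(A-\alpha_kI)v_k$ with $\alpha_k=v_k^TAv_k$; $w_k=\widetilde w_k/\|\widetilde w_k\|$; $\widetilde v_{k+1}=(A^T-\beta_kI)w_k$ with $\beta_k=w_k^TAw_k$; $v_{k+1}=\widetilde v_{k+1}/\|\widetilde v_{k+1}\|$. $d(A,v)$ is the grade of $v$ w.r.t. $A$ (degree of the monic polynomial $p$ of smallest degree with $p(A)v=0$); $\|\cdot\|$ is the Euclidean norm. *)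

theory Defs
  imports "Jordan_Normal_Form.Matrix" "HOL-Computational_Algebra.Polynomial"
begin

text \<open>A = diag(G_1,...,G_m,[1]) of size n = 2m (+1 if the trailing block is present).
  Blocks are indexed j = 1..m; block G_j occupies rows/columns 2j-2, 2j-1 (0-based).\<close>
definition rot_block_mat :: "nat \<Rightarrow> (nat \<Rightarrow> real) \<Rightarrow> (nat \<Rightarrow> real) \<Rightarrow> bool \<Rightarrow> real mat" where
  "rot_block_mat m c s t =
     mat (2 * m + (if t then 1 else 0)) (2 * m + (if t then 1 else 0))
       (\<lambda>(i, j). if i div 2 = j div 2 \<and> i div 2 < m then
                   (let b = i div 2 + 1 in
                      if i = j then c b else if even i then s b else - s b)
                 else if i = j then 1 else 0)"

definition vnorm :: "real vec \<Rightarrow> real" where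
  "vnorm v = sqrt (v \<bullet> v)"

definition poly_mat_vec :: "real mat \<Rightarrow> real poly \<Rightarrow> real vec \<Rightarrow> real vec" where
  "poly_mat_vec A p v =
     vec (dim_row A) (\<lambda>r. \<Sum>i\<le>degree p. coeff p i * ((A ^\<^sub>m i) *\<^sub>v v) $ r)"

definition grade :: "real mat \<Rightarrow> real vec \<Rightarrow> nat" where
  "grade A v = (LEAST k. \<exists>p. lead_coeff p = 1 \<and> degree p = k \<and>
                          poly_mat_vec A p v = 0\<^sub>v (dim_row A))"

definition aci_step :: "real mat \<Rightarrow> real vec \<Rightarrow> real vec" where
  "aci_step A v =
     (let n = dim_row A;
          \<alpha> = v \<bullet> (A *\<^sub>v v);
          wt = (A - \<alpha> \<cdot>\<^sub>m 1\<^sub>m n) *\<^sub>v v;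
          w = (1 / vnorm wt) \<cdot>\<^sub>v wt;
          \<beta> = w \<bullet> (A *\<^sub>v w);
          vt = (transpose_mat A - \<beta> \<cdot>\<^sub>m 1\<^sub>m n) *\<^sub>v w
      in (1 / vnorm vt) \<cdot>\<^sub>v vt)"

definition aci :: "real mat \<Rightarrow> real vec \<Rightarrow> nat \<Rightarrow> real vec" where
  "aci A v0 k = (aci_step A ^^ k) v0"

end

theory Submission
  imports Defs "HOL-Analysis.L2_Norm"
begin



locale aci_setup =
  fixes m n :: nat and c s :: "nat \<Rightarrow> real" and t :: bool
  assumes m1: "m \<ge> 1" and nd: "n = 2*m + (if t then 1 else 0)"
  and cs: "\<forall>j\<in>{1..m}. (c j)\<^sup>2 + (s j)\<^sup>2 = 1" and snz: "\<forall>j\<in>{1..m}. s j \<noteq> 0"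
  and c1: "0 < c 1" and cmono: "\<forall>j\<in>{1..<m}. c j < c (Suc j)" and cm: "c m < 1"
begin

abbreviation "A \<equiv> rot_block_mat m c s t"

definition Aop :: "(nat \<Rightarrow> real) \<Rightarrow> nat \<Rightarrow> real" where
  "Aop x i = (if i < 2*m then (if even i then c (i div 2 + 1) * x i + s (i div 2 + 1) * x (Suc i)
      else c (i div 2 + 1) * x i - s (i div 2 + 1) * x (i - 1)) else x i)"

definition Atop :: "(nat \<Rightarrow> real) \<Rightarrow> nat \<Rightarrow> real" where
  "Atop x i = (if i < 2*m then (if even i then c (i div 2 + 1) * x i - s (i div 2 + 1) * x (Suc i)
      else c (i div 2 + 1) * x i + s (i div 2 + 1) * x (i - 1)) else x i)"

lemma n_ge: "2*m \<le> n" using nd by simp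

lemma A_carrier: "A \<in> carrier_mat n n"
  using nd by (simp add: rot_block_mat_def)

lemma A_entry: "i < n \<Longrightarrow> k < n \<Longrightarrow> A $$ (i,k) =
   (if i div 2 = k div 2 \<and> i div 2 < m then
                   (let b = i div 2 + 1 in
                      if i = k then c b else if even i then s b else - s b)
                 else if i = k then 1 else 0)"
  using nd by (simp add: rot_block_mat_def)

lemma A_sum: assumes i: "i < n"
  shows "(\<Sum>k\<in>{0..<n}. A $$ (i,k) * y k) = Aop y i"
proof -
  consider "i < 2*m" "even i" | "i < 2*m" "odd i" | "\<not> i < 2*m" by blast
  then show ?thesis
  proof cases
    case 1
    have si: "Suc i < n" using 1 n_ge by presburger
    have "(\<Sum>k\<in>{0..<n}. A $$ (i,k) * y k) = (\<Sum>k\<in>{0..<n}. (if k = i then c (i div 2 + 1) * y i else 0) + (if k = Suc i then s (i div 2 + 1) * y (Suc i) else 0))"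
    proof (rule sum.cong)
      fix k assume k: "k \<in> {0..<n}"
      have e: "(i div 2 = k div 2) = (k = i \<or> k = Suc i)" using 1 by presburger
      have "i div 2 < m" using 1 by linarith
      then show "A $$ (i,k) * y k = (if k = i then c (i div 2 + 1) * y i else 0) + (if k = Suc i then s (i div 2 + 1) * y (Suc i) else 0)"
        using k i e 1 by (auto simp: A_entry Let_def)
    qed simp
    also have "\<dots> = c (i div 2 + 1) * y i + s (i div 2 + 1) * y (Suc i)"
      using i si by (simp add: sum.distrib)
    finally show ?thesis using 1 by (simp add: Aop_def)
  next
    case 2
    have si: "i - 1 < n" "i \<noteq> 0" using 2 n_ge by presburger+
    have "(\<Sum>k\<in>{0..<n}. A $$ (i,k) * y k) = (\<Sum>k\<in>{0..<n}. (if k = i then c (i div 2 + 1) * y i else 0) + (if k = i - 1 then - s (i div 2 + 1) * y (i - 1) else 0))"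
    proof (rule sum.cong)
      fix k assume k: "k \<in> {0..<n}"
      have e: "(i div 2 = k div 2) = (k = i \<or> k = i - 1)" using 2 by presburger
      have "i div 2 < m" using 2 by linarith
      then show "A $$ (i,k) * y k = (if k = i then c (i div 2 + 1) * y i else 0) + (if k = i - 1 then - s (i div 2 + 1) * y (i - 1) else 0)"
        using k i e 2 si by (auto simp: A_entry Let_def)
    qed simp
    also have "\<dots> = c (i div 2 + 1) * y i - s (i div 2 + 1) * y (i - 1)"
      using i si by (simp add: sum.distrib)
    finally show ?thesis using 2 by (simp add: Aop_def)
  next
    case 3
    have "(\<Sum>k\<in>{0..<n}. A $$ (i,k) * y k) = (\<Sum>k\<in>{0..<n}. (if k = i then y i else 0))"
    proof (rule sum.cong)
      fix k assume k: "k \<in> {0..<n}"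
      have "\<not> (i div 2 < m)" using 3 by linarith
      then show "A $$ (i,k) * y k = (if k = i then y i else 0)"
        using k i 3 by (auto simp: A_entry Let_def)
    qed simp
    then show ?thesis using 3 i by (simp add: Aop_def)
  qed
qed

lemma At_sum: assumes i: "i < n"
  shows "(\<Sum>k\<in>{0..<n}. A $$ (k,i) * y k) = Atop y i"
proof -
  consider "i < 2*m" "even i" | "i < 2*m" "odd i" | "\<not> i < 2*m" by blast
  then show ?thesis
  proof cases
    case 1
    have si: "Suc i < n" using 1 n_ge by presburger
    have "(\<Sum>k\<in>{0..<n}. A $$ (k,i) * y k) = (\<Sum>k\<in>{0..<n}. (if k = i then c (i div 2 + 1) * y i else 0) + (if k = Suc i then - s (i div 2 + 1) * y (Suc i) else 0))"
    proof (rule sum.cong)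
      fix k assume k: "k \<in> {0..<n}"
      have e: "(k div 2 = i div 2) = (k = i \<or> k = Suc i)" using 1 by presburger
      have e2: "k = Suc i \<Longrightarrow> k div 2 = i div 2 \<and> odd k" using 1 by presburger
      have "i div 2 < m" using 1 by linarith
      then show "A $$ (k,i) * y k = (if k = i then c (i div 2 + 1) * y i else 0) + (if k = Suc i then - s (i div 2 + 1) * y (Suc i) else 0)"
        using k i e e2 1 by (auto simp: A_entry Let_def)
    qed simp
    also have "\<dots> = c (i div 2 + 1) * y i - s (i div 2 + 1) * y (Suc i)"
      using i si by (simp add: sum.distrib)
    finally show ?thesis using 1 by (simp add: Atop_def)
  next
    case 2
    have si: "i - 1 < n" "i \<noteq> 0" using 2 n_ge by presburger+
    have "(\<Sum>k\<in>{0..<n}. A $$ (k,i) * y k) = (\<Sum>k\<in>{0..<n}. (if k = i then c (i div 2 + 1) * y i else 0) + (if k = i - 1 then s (i div 2 + 1) * y (i - 1) else 0))"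
    proof (rule sum.cong)
      fix k assume k: "k \<in> {0..<n}"
      have e: "(k div 2 = i div 2) = (k = i \<or> k = i - 1)" using 2 by presburger
      have e2: "k = i - 1 \<Longrightarrow> k div 2 = i div 2 \<and> even k" using 2 by presburger
      have "i div 2 < m" using 2 by linarith
      then show "A $$ (k,i) * y k = (if k = i then c (i div 2 + 1) * y i else 0) + (if k = i - 1 then s (i div 2 + 1) * y (i - 1) else 0)"
        using k i e e2 2 si by (auto simp: A_entry Let_def)
    qed simp
    also have "\<dots> = c (i div 2 + 1) * y i + s (i div 2 + 1) * y (i - 1)"
      using i si by (simp add: sum.distrib)
    finally show ?thesis using 2 by (simp add: Atop_def)
  next
    case 3
    have "(\<Sum>k\<in>{0..<n}. A $$ (k,i) * y k) = (\<Sum>k\<in>{0..<n}. (if k = i then y i else 0))"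
    proof (rule sum.cong)
      fix k assume k: "k \<in> {0..<n}"
      have "\<not> (i div 2 < m)" using 3 by linarith
      then show "A $$ (k,i) * y k = (if k = i then y i else 0)"
        using k i 3 by (auto simp: A_entry Let_def)
    qed simp
    then show ?thesis using 3 i by (simp add: Atop_def)
  qed
qed

definition ip :: "(nat \<Rightarrow> real) \<Rightarrow> (nat \<Rightarrow> real) \<Rightarrow> real" where
  "ip x y = (\<Sum>i\<in>{0..<n}. x i * y i)"
definition nrm :: "(nat \<Rightarrow> real) \<Rightarrow> real" where
  "nrm x = sqrt (ip x x)"
definition Mop :: "real \<Rightarrow> (nat \<Rightarrow> real) \<Rightarrow> nat \<Rightarrow> real" where
  "Mop a x i = Aop x i - a * x i"
definition Mtop :: "real \<Rightarrow> (nat \<Rightarrow> real) \<Rightarrow> nat \<Rightarrow> real" where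
  "Mtop a x i = Atop x i - a * x i"
definition alpha :: "(nat \<Rightarrow> real) \<Rightarrow> real" where
  "alpha x = ip x (Aop x)"
definition scl :: "real \<Rightarrow> (nat \<Rightarrow> real) \<Rightarrow> nat \<Rightarrow> real" where
  "scl r x i = r * x i"
definition F :: "(nat \<Rightarrow> real) \<Rightarrow> nat \<Rightarrow> real" where
  "F x = (let a = alpha x; wt = Mop a x; w = scl (1 / nrm wt) wt; b = alpha w; vt = Mtop b w
          in scl (1 / nrm vt) vt)"

lemma matvec_M: assumes "v \<in> carrier_vec n" "\<forall>k<n. v $ k = y k" "i < n"
  shows "((A - a \<cdot>\<^sub>m 1\<^sub>m n) *\<^sub>v v) $ i = Mop a y i"
proof -
  have "((A - a \<cdot>\<^sub>m 1\<^sub>m n) *\<^sub>v v) $ i = (\<Sum>k\<in>{0..<n}. (A $$ (i,k) - a * (if i = k then 1 else 0)) * y k)"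
    using assms A_carrier by (auto simp: scalar_prod_def intro!: sum.cong)
  also have "\<dots> = (\<Sum>k\<in>{0..<n}. A $$ (i,k) * y k - (if k = i then a * y i else 0))"
    by (rule sum.cong) (auto simp: algebra_simps)
  also have "\<dots> = (\<Sum>k\<in>{0..<n}. A $$ (i,k) * y k) - (\<Sum>k\<in>{0..<n}. (if k = i then a * y i else 0))"
    by (simp add: sum_subtractf)
  also have "\<dots> = Mop a y i" using A_sum assms by (simp add: Mop_def)
  finally show ?thesis .
qed

lemma matvec_Mt: assumes "v \<in> carrier_vec n" "\<forall>k<n. v $ k = y k" "i < n"
  shows "((transpose_mat A - a \<cdot>\<^sub>m 1\<^sub>m n) *\<^sub>v v) $ i = Mtop a y i"
proof -
  have "((transpose_mat A - a \<cdot>\<^sub>m 1\<^sub>m n) *\<^sub>v v) $ i = (\<Sum>k\<in>{0..<n}. (A $$ (k,i) - a * (if i = k then 1 else 0)) * y k)"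
    using assms A_carrier by (auto simp: scalar_prod_def intro!: sum.cong)
  also have "\<dots> = (\<Sum>k\<in>{0..<n}. A $$ (k,i) * y k - (if k = i then a * y i else 0))"
    by (rule sum.cong) (auto simp: algebra_simps)
  also have "\<dots> = (\<Sum>k\<in>{0..<n}. A $$ (k,i) * y k) - (\<Sum>k\<in>{0..<n}. (if k = i then a * y i else 0))"
    by (simp add: sum_subtractf)
  also have "\<dots> = Mtop a y i" using At_sum assms by (simp add: Mtop_def)
  finally show ?thesis .
qed

lemma matvec_A: assumes "v \<in> carrier_vec n" "\<forall>k<n. v $ k = y k" "i < n"
  shows "(A *\<^sub>v v) $ i = Aop y i"
  using assms A_carrier A_sum[of i y] by (auto simp: scalar_prod_def intro!: sum.cong)

lemma ip_vec: assumes "w \<in> carrier_vec n" "\<forall>k<n. v $ k = x k" "\<forall>k<n. w $ k = y k"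
  shows "v \<bullet> w = ip x y"
  using assms by (auto simp: scalar_prod_def ip_def intro!: sum.cong)

lemma vnorm_vec: assumes "v \<in> carrier_vec n" "\<forall>k<n. v $ k = x k"
  shows "vnorm v = nrm x"
  using ip_vec[OF assms(1) assms(2) assms(2)] by (simp add: vnorm_def nrm_def)


end


 context aci_setup begin
lemma step_vec: assumes v: "v \<in> carrier_vec n"
  shows "aci_step A v = vec n (F (($) v))"
proof -
  have dr: "dim_row A = n" using A_carrier by simp
  define x where "x = (($) v)"
  have vx: "\<forall>k<n. v $ k = x k" by (simp add: x_def)
  define a where "a = alpha x"
  have Av: "A *\<^sub>v v \<in> carrier_vec n" using A_carrier v by simp
  have a': "v \<bullet> (A *\<^sub>v v) = a"
    unfolding a_def alpha_def by (rule ip_vec[OF Av vx]) (use matvec_A[OF v vx] in blast)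
  define wt where "wt = (A - a \<cdot>\<^sub>m 1\<^sub>m n) *\<^sub>v v"
  have wtc: "wt \<in> carrier_vec n" unfolding wt_def by (rule mult_mat_vec_carrier[OF _ v]) (use A_carrier in \<open>auto intro: minus_carrier_mat\<close>)
  have wte: "\<forall>k<n. wt $ k = Mop a x k" using matvec_M[OF v vx] by (simp add: wt_def)
  define w where "w = (1 / vnorm wt) \<cdot>\<^sub>v wt"
  have wc: "w \<in> carrier_vec n" using wtc by (simp add: w_def)
  have we: "\<forall>k<n. w $ k = scl (1 / nrm (Mop a x)) (Mop a x) k"
    using wtc wte vnorm_vec[OF wtc wte] by (simp add: w_def scl_def)
  define wf where "wf = scl (1 / nrm (Mop a x)) (Mop a x)"
  have Aw: "A *\<^sub>v w \<in> carrier_vec n" using A_carrier wc by simp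
  define b where "b = alpha wf"
  have b': "w \<bullet> (A *\<^sub>v w) = b"
    unfolding b_def alpha_def wf_def[symmetric] by (rule ip_vec[OF Aw]) (use we matvec_A[OF wc we] in \<open>auto simp: wf_def\<close>)
  define vt where "vt = (transpose_mat A - b \<cdot>\<^sub>m 1\<^sub>m n) *\<^sub>v w"
  have vtc: "vt \<in> carrier_vec n" unfolding vt_def by (rule mult_mat_vec_carrier[OF _ wc]) (use A_carrier in \<open>auto intro: minus_carrier_mat\<close>)
  have vte: "\<forall>k<n. vt $ k = Mtop b wf k" using matvec_Mt[OF wc] we by (simp add: vt_def wf_def)
  have "aci_step A v = (1 / vnorm vt) \<cdot>\<^sub>v vt"
    unfolding aci_step_def Let_def dr a' wt_def[symmetric] w_def[symmetric] b' vt_def[symmetric] by simp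
  also have "\<dots> = vec n (F x)"
    using vtc vte vnorm_vec[OF vtc vte]
    by (intro eq_vecI) (auto simp: F_def Let_def a_def[symmetric] wf_def[symmetric] b_def[symmetric] scl_def)
  finally show ?thesis by (simp add: x_def)
qed
end 



lemma sum_pairs: "(\<Sum>i<2*(M::nat). g i) = (\<Sum>j<M. g (2*j) + g (Suc (2*j)))"
  by (induction M) (simp_all add: lessThan_Suc add_ac)

lemma L2_neg: "L2_set (\<lambda>i. - f i) A = L2_set f A"
  by (simp add: L2_set_def)

lemma L2_abs_scale: "L2_set (\<lambda>i. r * f i) A = \<bar>r\<bar> * L2_set f A"
proof -
  have "L2_set (\<lambda>i. r * f i) A = L2_set (\<lambda>i. \<bar>r\<bar> * f i) A"
    by (simp add: L2_set_def power_mult_distrib)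
  also have "\<dots> = \<bar>r\<bar> * L2_set f A" by (simp add: L2_set_right_distrib)
  finally show ?thesis .
qed

lemma norm_dist:
  assumes x1: "L2_set x I = 1" and up: "0 < L2_set u I" and lp: "0 < l"
  shows "L2_set (\<lambda>i. u i / L2_set u I - x i) I \<le> 2 * L2_set (\<lambda>i. u i - l * x i) I / l"
proof -
  define N where "N = L2_set u I"
  define D where "D = L2_set (\<lambda>i. u i - l * x i) I"
  have h1: "L2_set (\<lambda>i. u i / l - x i) I = D / l"
  proof -
    have eq: "(\<lambda>i. u i / l - x i) = (\<lambda>i. (1/l) * (u i - l * x i))" using lp by (auto simp: field_simps)
    show ?thesis unfolding eq L2_abs_scale D_def using lp by simp
  qed
  have lx: "L2_set (\<lambda>i. l * x i) I = l" using x1 lp by (simp add: L2_abs_scale)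
  have t1: "N \<le> D + l"
  proof -
    have "N = L2_set (\<lambda>i. (u i - l * x i) + l * x i) I" by (simp add: N_def)
    also have "\<dots> \<le> D + l" using L2_set_triangle_ineq[of "\<lambda>i. u i - l * x i" "\<lambda>i. l * x i" I] lx
      by (simp add: D_def)
    finally show ?thesis .
  qed
  have t2: "l \<le> D + N"
  proof -
    have "l = L2_set (\<lambda>i. - (u i - l * x i) + u i) I" using lx by simp
    also have "\<dots> \<le> D + N" using L2_set_triangle_ineq[of "\<lambda>i. - (u i - l * x i)" u I]
      by (simp only: L2_neg D_def N_def)
    finally show ?thesis .
  qed
  have Np: "0 < N" using up by (simp add: N_def)
  have h2: "L2_set (\<lambda>i. u i / N - u i / l) I \<le> D / l"
  proof -
    have "(\<lambda>i. u i / N - u i / l) = (\<lambda>i. (1/N - 1/l) * u i)" by (auto simp: field_simps)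
    then have "L2_set (\<lambda>i. u i / N - u i / l) I = \<bar>1/N - 1/l\<bar> * N" by (simp add: L2_abs_scale N_def)
    also have "\<dots> = \<bar>l - N\<bar> / l" using Np lp by (simp add: field_simps abs_divide abs_mult)
    also have "\<dots> \<le> D / l" using t1 t2 lp by (simp add: divide_right_mono)
    finally show ?thesis .
  qed
  have "L2_set (\<lambda>i. u i / N - x i) I = L2_set (\<lambda>i. (u i / N - u i / l) + (u i / l - x i)) I" by simp
  also have "\<dots> \<le> L2_set (\<lambda>i. u i / N - u i / l) I + L2_set (\<lambda>i. u i / l - x i) I"
    by (rule L2_set_triangle_ineq)
  also have "\<dots> \<le> 2 * D / l" using h1 h2 by simp
  finally show ?thesis by (simp add: N_def D_def)
qed

context aci_setup begin

definition bw :: "(nat \<Rightarrow> real) \<Rightarrow> nat \<Rightarrow> real" where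
  "bw x j = (x (2*j))\<^sup>2 + (x (Suc (2*j)))\<^sup>2"
definition tw :: "(nat \<Rightarrow> real) \<Rightarrow> real" where
  "tw x = (if t then (x (2*m))\<^sup>2 else 0)"
definition T :: "(nat \<Rightarrow> real) \<Rightarrow> real" where
  "T x = (\<Sum>j\<in>{1..<m}. bw x j) + tw x"
definition R :: "(nat \<Rightarrow> real) \<Rightarrow> real" where
  "R x = T x / bw x 0"
definition gf :: "real \<Rightarrow> nat \<Rightarrow> real" where
  "gf a k = (c k - a)\<^sup>2 + (s k)\<^sup>2"
definition cg :: real where "cg = (if m \<ge> 2 then c 2 else 1)"
definition gam :: real where "gam = cg - c 1"
definition rho :: real where "rho = 1 - c 1 * gam"

lemma sum_n: "(\<Sum>i\<in>{0..<n}. g i) = (\<Sum>j<m. g (2*j) + g (Suc (2*j))) + (if t then g (2*m) else 0)"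
  using nd by (cases t) (simp_all add: atLeast0LessThan sum_pairs)

lemma sum_m: "(\<Sum>j<m. h j) = h 0 + (\<Sum>j\<in>{1..<m}. h j)"
proof -
  have "{..<m} = insert 0 {1..<m}" using m1 by auto
  then show ?thesis by simp
qed

lemma Aop_e: "j < m \<Longrightarrow> Aop x (2*j) = c (j+1) * x (2*j) + s (j+1) * x (Suc (2*j))"
  by (simp add: Aop_def)
lemma Aop_o: "j < m \<Longrightarrow> Aop x (Suc (2*j)) = c (j+1) * x (Suc (2*j)) - s (j+1) * x (2*j)"
  by (simp add: Aop_def)
lemma Aop_t: "Aop x (2*m) = x (2*m)"
  by (simp add: Aop_def)
lemma Atop_e: "j < m \<Longrightarrow> Atop x (2*j) = c (j+1) * x (2*j) - s (j+1) * x (Suc (2*j))"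
  by (simp add: Atop_def)
lemma Atop_o: "j < m \<Longrightarrow> Atop x (Suc (2*j)) = c (j+1) * x (Suc (2*j)) + s (j+1) * x (2*j)"
  by (simp add: Atop_def)
lemma Atop_t: "Atop x (2*m) = x (2*m)"
  by (simp add: Atop_def)

lemma ip_sq: "ip x x = (\<Sum>j<m. bw x j) + tw x"
  unfolding ip_def sum_n by (simp add: bw_def tw_def power2_eq_square)

lemma ip_sq2: "ip x x = bw x 0 + T x"
  unfolding ip_sq sum_m T_def by simp

lemma alpha_eq: "alpha x = (\<Sum>j<m. c (j+1) * bw x j) + tw x"
  unfolding alpha_def ip_def sum_n
  by (auto simp: bw_def tw_def Aop_e Aop_o Aop_t intro!: sum.cong) (simp_all add: power2_eq_square algebra_simps)

lemma bw_Mop: "j < m \<Longrightarrow> bw (Mop a x) j = gf a (j+1) * bw x j"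
  by (simp add: bw_def gf_def Mop_def Aop_e Aop_o) (simp add: power2_eq_square algebra_simps)
lemma bw_Mtop: "j < m \<Longrightarrow> bw (Mtop a x) j = gf a (j+1) * bw x j"
  by (simp add: bw_def gf_def Mtop_def Atop_e Atop_o) (simp add: power2_eq_square algebra_simps)
lemma tw_Mop: "tw (Mop a x) = (1-a)\<^sup>2 * tw x"
  by (simp add: tw_def Mop_def Aop_t) (simp add: power2_eq_square algebra_simps)
lemma tw_Mtop: "tw (Mtop a x) = (1-a)\<^sup>2 * tw x"
  by (simp add: tw_def Mtop_def Atop_t) (simp add: power2_eq_square algebra_simps)
lemma bw_scl: "bw (scl r x) j = r\<^sup>2 * bw x j"
  by (simp add: bw_def scl_def power2_eq_square algebra_simps)
lemma tw_scl: "tw (scl r x) = r\<^sup>2 * tw x"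
  by (simp add: tw_def scl_def power2_eq_square algebra_simps)
lemma T_scl: "T (scl r x) = r\<^sup>2 * T x"
  by (simp add: T_def bw_scl tw_scl sum_distrib_left algebra_simps)

lemma c_mono: "1 \<le> i \<Longrightarrow> i \<le> k \<Longrightarrow> k \<le> m \<Longrightarrow> c i \<le> c k"
proof (induction k)
  case 0 then show ?case by simp
next
  case (Suc k)
  show ?case
  proof (cases "i = Suc k")
    case False
    then have "c i \<le> c k" using Suc by simp
    moreover have "c k < c (Suc k)" using cmono Suc False by auto
    ultimately show ?thesis by simp
  qed simp
qed

lemma c_range: "k \<in> {1..m} \<Longrightarrow> c 1 \<le> c k \<and> c k < 1"
  using c_mono[of 1 k] c_mono[of k m] cm by fastforce

lemma gam_facts: "0 < gam" "c 1 + gam \<le> 1" "\<And>k. k \<in> {2..m} \<Longrightarrow> c 1 + gam \<le> c k"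
proof -
  show "0 < gam"
  proof (cases "m \<ge> 2")
    case True
    then have "c 1 < c (Suc 1)" using cmono by auto
    then have "c 1 < c 2" by (simp add: numeral_2_eq_2)
    then show ?thesis using True by (simp add: gam_def cg_def)
  next
    case False then show ?thesis using c_range[of 1] m1 by (simp add: gam_def cg_def)
  qed
  show "c 1 + gam \<le> 1"
    using c_range[of 2] by (auto simp: gam_def cg_def)
  fix k assume "k \<in> {2..m}"
  then show "c 1 + gam \<le> c k" using c_mono[of 2 k] by (auto simp: gam_def cg_def)
qed

lemma rho_facts: "0 < rho" "rho < 1"
proof -
  have "c 1 * gam < 1 * 1" using gam_facts c_range[of 1] m1 c1
    by (intro mult_strict_mono) auto
  then show "0 < rho" by (simp add: rho_def)
  show "rho < 1" using gam_facts c1 by (simp add: rho_def)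
qed

lemma gf_eq: "k \<in> {1..m} \<Longrightarrow> gf a k = 1 - 2*a*c k + a\<^sup>2"
  using cs by (auto simp: gf_def power2_eq_square algebra_simps)

lemma s1_facts: "0 < (s 1)\<^sup>2" "(s 1)\<^sup>2 \<le> 1"
proof -
  have e: "(c 1)\<^sup>2 + (s 1)\<^sup>2 = 1" using cs m1 by auto
  have "s 1 \<noteq> 0" using snz m1 by auto
  then show "0 < (s 1)\<^sup>2" by simp
  show "(s 1)\<^sup>2 \<le> 1" using e zero_le_power2[of "c 1"] by linarith
qed

lemma bw_nn: "0 \<le> bw x j" by (simp add: bw_def)
lemma tw_nn: "0 \<le> tw x" by (simp add: tw_def)
lemma T_nn: "0 \<le> T x" by (simp add: T_def bw_nn tw_nn sum_nonneg)

lemma alpha_bounds: assumes "ip x x = 1"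
  shows "c 1 \<le> alpha x" "alpha x \<le> 1" "alpha x - c 1 \<le> T x"
proof -
  have one: "(\<Sum>j<m. bw x j) + tw x = 1" using assms ip_sq by simp
  have "alpha x - c 1 = alpha x - c 1 * ((\<Sum>j<m. bw x j) + tw x)" using one by simp
  also have "\<dots> = (\<Sum>j<m. (c (j+1) - c 1) * bw x j) + (1 - c 1) * tw x"
    by (simp add: alpha_eq algebra_simps sum_subtractf sum_distrib_left)
  finally have e1: "alpha x - c 1 = (\<Sum>j<m. (c (j+1) - c 1) * bw x j) + (1 - c 1) * tw x" .
  have "1 - alpha x = ((\<Sum>j<m. bw x j) + tw x) - alpha x" using one by simp
  also have "\<dots> = (\<Sum>j<m. (1 - c (j+1)) * bw x j)"
    by (simp add: alpha_eq algebra_simps sum_subtractf sum_distrib_left)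
  finally have e2: "1 - alpha x = (\<Sum>j<m. (1 - c (j+1)) * bw x j)" .
  have cr: "\<And>j. j < m \<Longrightarrow> c 1 \<le> c (j+1) \<and> c (j+1) < 1" using c_range by auto
  have "0 \<le> (\<Sum>j<m. (c (j+1) - c 1) * bw x j)"
    using cr by (intro sum_nonneg) (simp add: bw_nn)
  moreover have "0 \<le> (1 - c 1) * tw x" using c_range[of 1] m1 tw_nn by simp
  ultimately show "c 1 \<le> alpha x" using e1 by linarith
  have "0 \<le> (\<Sum>j<m. (1 - c (j+1)) * bw x j)"
    using cr by (intro sum_nonneg) (simp add: bw_nn less_imp_le)
  then show "alpha x \<le> 1" using e2 by linarith
  have "(\<Sum>j<m. (c (j+1) - c 1) * bw x j) = (\<Sum>j\<in>{1..<m}. (c (j+1) - c 1) * bw x j)"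
    by (simp add: sum_m)
  also have "\<dots> \<le> (\<Sum>j\<in>{1..<m}. bw x j)"
  proof (intro sum_mono)
    fix j assume "j \<in> {1..<m}"
    then have "0 \<le> c (j+1) - c 1" "c (j+1) - c 1 \<le> 1" using cr[of j] c1 by auto
    then show "(c (j+1) - c 1) * bw x j \<le> bw x j" using bw_nn[of x j] mult_left_le_one_le by blast
  qed
  finally have "(\<Sum>j<m. (c (j+1) - c 1) * bw x j) \<le> (\<Sum>j\<in>{1..<m}. bw x j)" .
  moreover have "(1 - c 1) * tw x \<le> tw x" using c1 tw_nn[of x] mult_left_le_one_le[of "tw x" "1 - c 1"] c_range[of 1] m1 by auto
  ultimately show "alpha x - c 1 \<le> T x" using e1 by (simp add: T_def)
qed

lemma blockscale:
  assumes bwy: "\<forall>j<m. bw y j = gf a (j+1) * bw x j" and twy: "tw y = (1-a)\<^sup>2 * tw x"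
    and a1: "c 1 \<le> a" and a2: "a \<le> 1" and b0: "0 < bw x 0"
  shows "0 < bw y 0" "R y \<le> rho * R x"
proof -
  define g1 where "g1 = gf a 1"
  have m1': "1 \<in> {1..m}" using m1 by simp
  have g1pos: "0 < g1" using s1_facts(1) by (simp add: g1_def gf_def add_nonneg_pos)
  have a0: "0 \<le> a" using a1 c1 by simp
  have g1le: "g1 \<le> 2"
  proof -
    have "a * c 1 \<ge> 0" using a0 c1 by simp
    moreover have "a\<^sup>2 \<le> 1" using a0 a2 by (simp add: power_le_one)
    ultimately show ?thesis using gf_eq[OF m1', of a] by (simp add: g1_def)
  qed
  have y0: "bw y 0 = g1 * bw x 0" using bwy m1 by (simp add: g1_def)
  then show "0 < bw y 0" using g1pos b0 by simp
  have Ty: "T y \<le> (g1 - 2*a*gam) * T x"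
  proof -
    have "(\<Sum>j\<in>{1..<m}. bw y j) \<le> (\<Sum>j\<in>{1..<m}. (g1 - 2*a*gam) * bw x j)"
    proof (intro sum_mono)
      fix j assume j: "j \<in> {1..<m}"
      then have "j+1 \<in> {2..m}" "j+1 \<in> {1..m}" by auto
      then have "c 1 + gam \<le> c (j+1)" using gam_facts(3) by blast
      then have "a * (c 1 + gam) \<le> a * c (j+1)" using a0 by (simp add: mult_left_mono)
      then have "gf a (j+1) \<le> g1 - 2*a*gam"
        using gf_eq[OF \<open>j+1 \<in> {1..m}\<close>, of a] gf_eq[OF m1', of a] by (simp add: g1_def algebra_simps)
      then show "bw y j \<le> (g1 - 2*a*gam) * bw x j"
        using bwy j bw_nn[of x j] by (simp add: mult_right_mono)
    qed
    moreover have "tw y \<le> (g1 - 2*a*gam) * tw x"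
    proof -
      have "a * (c 1 + gam) \<le> a * 1" using a0 gam_facts(2) mult_left_mono by blast
      then have "(1-a)\<^sup>2 \<le> g1 - 2*a*gam"
        using gf_eq[OF m1', of a] by (simp add: g1_def power2_eq_square algebra_simps)
      then show ?thesis using twy tw_nn[of x] by (simp add: mult_right_mono)
    qed
    ultimately show ?thesis by (simp add: T_def sum_distrib_left[symmetric] distrib_left)
  qed
  have "R y = T y / (g1 * bw x 0)" by (simp add: R_def y0)
  also have "\<dots> \<le> (g1 - 2*a*gam) * T x / (g1 * bw x 0)"
    using Ty g1pos b0 by (simp add: divide_right_mono)
  also have "\<dots> = (1 - 2*a*gam/g1) * R x"
    using g1pos by (simp add: R_def field_simps)
  also have "\<dots> \<le> rho * R x"
  proof (rule mult_right_mono)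
    show "0 \<le> R x" using T_nn b0 by (simp add: R_def)
    have "c 1 * g1 \<le> c 1 * 2" using g1le c1 by (intro mult_left_mono) auto
    then have "c 1 * g1 \<le> 2 * a" using a1 by linarith
    then have "(c 1 * g1) * gam \<le> (2 * a) * gam" using gam_facts(1) by (intro mult_right_mono) auto
    then have "c 1 * gam * g1 \<le> 2 * a * gam" by (simp add: ac_simps)
    then have "c 1 * gam \<le> 2*a*gam/g1" using g1pos by (simp add: field_simps)
    then show "1 - 2*a*gam/g1 \<le> rho" by (simp add: rho_def)
  qed
  finally show "R y \<le> rho * R x" .
qed

lemma nrm_L2: "nrm x = L2_set x {0..<n}"
  by (simp add: nrm_def ip_def L2_set_def power2_eq_square)

lemma Mtop_scl: "Mtop b (scl r y) = scl r (Mtop b y)"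
  by (rule ext) (simp add: Mtop_def Atop_def scl_def algebra_simps)

lemma ip_scl: "ip (scl r x) (scl r x) = r\<^sup>2 * ip x x"
  by (simp add: ip_def scl_def sum_distrib_left power2_eq_square algebra_simps)

lemma gf_bounds: "0 \<le> a \<Longrightarrow> a \<le> 1 \<Longrightarrow> k \<in> {1..m} \<Longrightarrow> 0 \<le> gf a k \<and> gf a k \<le> 2"
proof -
  assume a: "0 \<le> a" "a \<le> 1" and k: "k \<in> {1..m}"
  have "0 \<le> a * c k" using a c_range[OF k] c1 by simp
  moreover have "a\<^sup>2 \<le> 1" using a by (simp add: power_le_one)
  ultimately have "gf a k \<le> 2" using gf_eq[OF k, of a] by simp
  moreover have "0 \<le> gf a k" by (simp add: gf_def)
  ultimately show ?thesis by simp
qed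

lemma sqdiff: "(p - q)\<^sup>2 \<le> 2 * p\<^sup>2 + 2 * (q::real)\<^sup>2"
proof -
  have "2 * p\<^sup>2 + 2 * q\<^sup>2 - (p - q)\<^sup>2 = (p + q)\<^sup>2" by (simp add: power2_eq_square algebra_simps)
  then show ?thesis using zero_le_power2[of "p+q"] by linarith
qed

lemma unit_bw0_le: "ip x x = 1 \<Longrightarrow> bw x 0 \<le> 1"
  using ip_sq2[of x] T_nn[of x] by simp

lemma T_le_R: "ip x x = 1 \<Longrightarrow> 0 < bw x 0 \<Longrightarrow> T x \<le> R x"
proof -
  assume u: "ip x x = 1" and b: "0 < bw x 0"
  have "T x = R x * bw x 0" using b by (simp add: R_def)
  also have "\<dots> \<le> R x * 1" using unit_bw0_le[OF u] T_nn[of x] b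
    by (intro mult_left_mono) (auto simp: R_def)
  finally show ?thesis by simp
qed

lemma normalize_facts: assumes b: "0 < bw y 0"
  shows "0 < nrm y" "ip (scl (1 / nrm y) y) (scl (1 / nrm y) y) = 1"
    "0 < bw (scl (1 / nrm y) y) 0" "R (scl (1 / nrm y) y) = R y"
proof -
  have ipp: "0 < ip y y" using ip_sq2[of y] T_nn[of y] b by simp
  then show np: "0 < nrm y" by (simp add: nrm_def)
  have "(nrm y)\<^sup>2 = ip y y" using ipp by (simp add: nrm_def)
  then show "ip (scl (1 / nrm y) y) (scl (1 / nrm y) y) = 1"
    using np ipp by (simp add: ip_scl power_divide)
  show "0 < bw (scl (1 / nrm y) y) 0" using np b by (simp add: bw_scl)
  show "R (scl (1 / nrm y) y) = R y" using np by (simp add: R_def bw_scl T_scl)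
qed

end



context aci_setup begin

lemma step_analysis:
  assumes u1: "ip x x = 1" and b0: "0 < bw x 0"
  shows "ip (F x) (F x) = 1" "0 < bw (F x) 0" "R (F x) \<le> rho * R x"
    "L2_set (\<lambda>i. F x i - x i) {0..<n} \<le> 2 / (s 1)\<^sup>2 * sqrt ((R x)\<^sup>2 + 16 * R x)"
proof -
  define \<alpha> where "\<alpha> = alpha x"
  have \<alpha>: "c 1 \<le> \<alpha>" "\<alpha> \<le> 1" "\<alpha> - c 1 \<le> T x" using alpha_bounds[OF u1] \<alpha>_def by auto
  define y where "y = Mop \<alpha> x"
  have bs1: "0 < bw y 0" "R y \<le> rho * R x"
    using blockscale[of y \<alpha> x] bw_Mop tw_Mop \<alpha> b0 y_def by auto
  define w where "w = scl (1 / nrm y) y"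
  have wf: "0 < nrm y" "ip w w = 1" "0 < bw w 0" "R w = R y" using normalize_facts[OF bs1(1)] w_def by auto
  define \<beta> where "\<beta> = alpha w"
  have \<beta>: "c 1 \<le> \<beta>" "\<beta> \<le> 1" "\<beta> - c 1 \<le> T w" using alpha_bounds[OF wf(2)] \<beta>_def by auto
  define u where "u = Mtop \<beta> y"
  have bs2: "0 < bw u 0" "R u \<le> rho * R y"
    using blockscale[of u \<beta> y] bw_Mtop tw_Mtop \<beta> bs1 u_def by auto
  have vt: "Mtop \<beta> w = scl (1/nrm y) u" by (simp add: w_def u_def Mtop_scl)
  have nu: "0 < nrm u" using normalize_facts(1)[OF bs2(1)] .
  have nvt: "nrm (scl (1/nrm y) u) = (1/nrm y) * nrm u"
    using wf(1) by (simp add: nrm_def ip_scl real_sqrt_mult)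
  have Fx: "F x = scl (1/nrm u) u"
    unfolding F_def Let_def \<alpha>_def[symmetric] y_def[symmetric] w_def[symmetric] \<beta>_def[symmetric] vt nvt
    using wf(1) nu by (auto simp: scl_def fun_eq_iff field_simps)
  show "ip (F x) (F x) = 1" "0 < bw (F x) 0" using normalize_facts[OF bs2(1)] Fx by simp_all
  have Rx0: "0 \<le> R x" using T_nn b0 by (simp add: R_def)
  have Ry0: "0 \<le> R y" using T_nn bs1 by (simp add: R_def)
  have Ryx: "R y \<le> R x" using bs1(2) rho_facts Rx0 mult_left_le_one_le[of "R x" rho] by linarith
  have "R (F x) = R u" using normalize_facts(4)[OF bs2(1)] Fx by simp
  also have "\<dots> \<le> rho * R y" by (rule bs2(2))
  also have "\<dots> \<le> rho * R x" using Ryx rho_facts by (simp add: mult_left_mono)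
  finally show "R (F x) \<le> rho * R x" .
  define a1 where "a1 = (c 1 - \<alpha>) * (c 1 - \<beta>) + (s 1)\<^sup>2"
  have pr0: "0 \<le> (c 1 - \<alpha>) * (c 1 - \<beta>)" using \<alpha> \<beta> by (simp add: mult_nonpos_nonpos)
  have pr1: "(c 1 - \<alpha>) * (c 1 - \<beta>) \<le> 1"
  proof -
    have "\<bar>c 1 - \<alpha>\<bar> \<le> 1" "\<bar>c 1 - \<beta>\<bar> \<le> 1" using \<alpha> \<beta> c1 by auto
    then have "\<bar>c 1 - \<alpha>\<bar> * \<bar>c 1 - \<beta>\<bar> \<le> 1 * 1" by (intro mult_mono) auto
    then show ?thesis by (simp add: abs_mult[symmetric])
  qed
  have a1lo: "(s 1)\<^sup>2 \<le> a1" using pr0 by (simp add: a1_def)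
  have a1hi: "a1 \<le> 2" using pr1 s1_facts by (simp add: a1_def)
  have a1pos: "0 < a1" using a1lo s1_facts(1) by linarith
  have Txr: "T x \<le> R x" using T_le_R[OF u1 b0] .
  have Twr: "T w \<le> R x" using T_le_R[OF wf(2) wf(3)] wf(4) Ryx by simp
  have ab: "\<bar>\<alpha> - \<beta>\<bar> \<le> R x" using \<alpha> \<beta> Txr Twr by linarith
  define d where "d = (\<lambda>i. u i - a1 * x i)"
  have m0: "0 < m" using m1 by simp
  have u0: "u 0 = a1 * x 0 + s 1 * (\<alpha> - \<beta>) * x (Suc 0)"
    by (simp add: u_def y_def Mtop_def Mop_def Atop_e[OF m0, simplified] Atop_o[OF m0, simplified] Aop_e[OF m0, simplified] Aop_o[OF m0, simplified])
      (simp add: a1_def power2_eq_square algebra_simps)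
  have u1': "u (Suc 0) = a1 * x (Suc 0) - s 1 * (\<alpha> - \<beta>) * x 0"
    by (simp add: u_def y_def Mtop_def Mop_def Atop_e[OF m0, simplified] Atop_o[OF m0, simplified] Aop_e[OF m0, simplified] Aop_o[OF m0, simplified])
      (simp add: a1_def power2_eq_square algebra_simps)
  have blk0: "(d (2*0))\<^sup>2 + (d (Suc (2*0)))\<^sup>2 = (s 1)\<^sup>2 * (\<alpha> - \<beta>)\<^sup>2 * bw x 0"
    by (simp add: d_def bw_def u0 u1') (simp add: power2_eq_square algebra_simps)
  have a1sq: "a1\<^sup>2 \<le> 4" using a1hi a1pos power_mono[of a1 2 2] by simp
  have blkj: "(d (2*j))\<^sup>2 + (d (Suc (2*j)))\<^sup>2 \<le> 16 * bw x j" if j: "j < m" for j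
  proof -
    have "(d (2*j))\<^sup>2 + (d (Suc (2*j)))\<^sup>2 \<le> 2 * bw u j + 2 * a1\<^sup>2 * bw x j"
      using sqdiff[of "u (2*j)" "a1 * x (2*j)"] sqdiff[of "u (Suc (2*j))" "a1 * x (Suc (2*j))"]
      by (simp add: d_def bw_def power_mult_distrib algebra_simps)
    moreover have "bw u j = gf \<beta> (j+1) * (gf \<alpha> (j+1) * bw x j)"
      using j by (simp add: u_def y_def bw_Mtop bw_Mop)
    moreover have "gf \<beta> (j+1) * (gf \<alpha> (j+1) * bw x j) \<le> 2 * (2 * bw x j)"
    proof -
      have k: "j+1 \<in> {1..m}" using j by simp
      have "0 \<le> gf \<alpha> (j+1)" "gf \<alpha> (j+1) \<le> 2" "0 \<le> gf \<beta> (j+1)" "gf \<beta> (j+1) \<le> 2"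
        using gf_bounds[OF _ _ k] \<alpha> \<beta> c1 by auto
      then show ?thesis using bw_nn[of x j]
        by (intro mult_mono) (auto intro: mult_mono mult_nonneg_nonneg)
    qed
    moreover have "a1\<^sup>2 * bw x j \<le> 4 * bw x j" using a1sq bw_nn[of x j] by (rule mult_right_mono)
    ultimately show ?thesis by linarith
  qed
  have trl: "(if t then (d (2*m))\<^sup>2 else 0) \<le> 16 * tw x"
  proof -
    have "(if t then (d (2*m))\<^sup>2 else 0) \<le> 2 * tw u + 2 * a1\<^sup>2 * tw x"
      using sqdiff[of "u (2*m)" "a1 * x (2*m)"] by (simp add: d_def tw_def power_mult_distrib algebra_simps)
    moreover have "tw u = (1-\<beta>)\<^sup>2 * ((1-\<alpha>)\<^sup>2 * tw x)" by (simp add: u_def y_def tw_Mtop tw_Mop)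
    moreover have "(1-\<beta>)\<^sup>2 * ((1-\<alpha>)\<^sup>2 * tw x) \<le> 1 * (1 * tw x)"
    proof -
      have "(1-\<beta>)\<^sup>2 \<le> 1" "(1-\<alpha>)\<^sup>2 \<le> 1" using \<alpha> \<beta> c1 by (auto intro!: power_le_one)
      then show ?thesis using tw_nn[of x] by (intro mult_mono) (auto intro: mult_left_le_one_le)
    qed
    moreover have "a1\<^sup>2 * tw x \<le> 4 * tw x" using a1sq tw_nn[of x] by (rule mult_right_mono)
    moreover have "0 \<le> tw x" by (rule tw_nn)
    ultimately show ?thesis by linarith
  qed
  have sumd: "(\<Sum>i\<in>{0..<n}. (d i)\<^sup>2) \<le> (\<alpha> - \<beta>)\<^sup>2 + 16 * T x"
  proof -
    have "(\<Sum>i\<in>{0..<n}. (d i)\<^sup>2) = (d (2*0))\<^sup>2 + (d (Suc (2*0)))\<^sup>2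
        + (\<Sum>j\<in>{1..<m}. (d (2*j))\<^sup>2 + (d (Suc (2*j)))\<^sup>2) + (if t then (d (2*m))\<^sup>2 else 0)"
      unfolding sum_n sum_m[of "\<lambda>j. (d (2*j))\<^sup>2 + (d (Suc (2*j)))\<^sup>2"] by simp
    also have "\<dots> \<le> (s 1)\<^sup>2 * (\<alpha> - \<beta>)\<^sup>2 * bw x 0 + (\<Sum>j\<in>{1..<m}. 16 * bw x j) + 16 * tw x"
      using blk0 blkj trl by (intro add_mono sum_mono) auto
    also have "(s 1)\<^sup>2 * (\<alpha> - \<beta>)\<^sup>2 * bw x 0 \<le> 1 * (\<alpha> - \<beta>)\<^sup>2 * 1"
      using s1_facts unit_bw0_le[OF u1] b0 by (intro mult_mono) auto
    finally show ?thesis by (simp add: T_def sum_distrib_left[symmetric] distrib_left)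
  qed
  have sq2: "(\<alpha> - \<beta>)\<^sup>2 \<le> (R x)\<^sup>2" using ab by (metis abs_le_square_iff abs_of_nonneg Rx0)
  have L2d: "L2_set d {0..<n} \<le> sqrt ((R x)\<^sup>2 + 16 * R x)"
    unfolding L2_set_def using sumd sq2 Txr by (intro real_sqrt_le_mono) linarith
  have x1: "L2_set x {0..<n} = 1" using u1 by (simp add: nrm_L2[symmetric] nrm_def)
  have up: "0 < L2_set u {0..<n}" using nu by (simp add: nrm_L2)
  have "L2_set (\<lambda>i. F x i - x i) {0..<n} = L2_set (\<lambda>i. u i / L2_set u {0..<n} - x i) {0..<n}"
    by (simp add: Fx scl_def nrm_L2)
  also have "\<dots> \<le> 2 * L2_set d {0..<n} / a1"
    unfolding d_def by (rule norm_dist[OF x1 up a1pos])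
  also have "\<dots> \<le> 2 * sqrt ((R x)\<^sup>2 + 16 * R x) / (s 1)\<^sup>2"
    using L2d a1lo s1_facts Rx0 by (intro frac_le) auto
  finally show "L2_set (\<lambda>i. F x i - x i) {0..<n} \<le> 2 / (s 1)\<^sup>2 * sqrt ((R x)\<^sup>2 + 16 * R x)" by simp
qed

end




lemma geo_conv:
  fixes f :: "nat \<Rightarrow> real"
  assumes b: "\<And>k. \<bar>f (Suc k) - f k\<bar> \<le> C * q^k" and q: "0 \<le> q" "q < 1"
  shows "convergent f"
proof -
  have sg: "summable (\<lambda>k. C * q^k)" using q by (intro summable_mult summable_geometric) simp
  have s: "summable (\<lambda>k. f (Suc k) - f k)"
    by (rule summable_comparison_test[OF _ sg]) (use b in simp)
  have "(\<lambda>n. \<Sum>k<n. f (Suc k) - f k) \<longlonglongrightarrow> suminf (\<lambda>k. f (Suc k) - f k)"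
    by (rule summable_LIMSEQ[OF s])
  then have "(\<lambda>n. f n - f 0) \<longlonglongrightarrow> suminf (\<lambda>k. f (Suc k) - f k)"
    by (simp add: sum_lessThan_telescope)
  then have "(\<lambda>n. f n - f 0 + f 0) \<longlonglongrightarrow> suminf (\<lambda>k. f (Suc k) - f k) + f 0"
    by (intro tendsto_add) auto
  then show ?thesis by (auto intro: convergentI)
qed

context aci_setup begin

lemma agree_facts: assumes ag: "\<forall>i<n. y i = z i"
  shows "ip y y = ip z z" "bw y 0 = bw z 0" "R y = R z"
proof -
  show "ip y y = ip z z" using ag by (simp add: ip_def)
  have bwe: "\<And>j. j < m \<Longrightarrow> bw y j = bw z j"
  proof -
    fix j assume "j < m"
    then have "2*j < n" "Suc (2*j) < n" using n_ge by auto
    then show "bw y j = bw z j" using ag by (simp add: bw_def)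
  qed
  then show "bw y 0 = bw z 0" using m1 by simp
  have "tw y = tw z" using ag nd by (simp add: tw_def)
  moreover have "(\<Sum>j\<in>{1..<m}. bw y j) = (\<Sum>j\<in>{1..<m}. bw z j)" using bwe by (intro sum.cong) auto
  ultimately show "R y = R z" using bwe m1 by (simp add: R_def T_def)
qed

lemma seq_conv:
  assumes st: "\<And>k. \<forall>i<n. xs (Suc k) i = F (xs k) i"
    and u0: "ip (xs 0) (xs 0) = 1" and b0: "0 < bw (xs 0) 0"
  shows "\<And>i. i < n \<Longrightarrow> convergent (\<lambda>k. xs k i)"
proof -
  have inv: "ip (xs k) (xs k) = 1 \<and> 0 < bw (xs k) 0 \<and> R (xs k) \<le> rho^k * R (xs 0)" for k
  proof (induction k)
    case 0 then show ?case using u0 b0 by simp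
  next
    case (Suc k)
    then have u: "ip (xs k) (xs k) = 1" "0 < bw (xs k) 0" by auto
    note sa = step_analysis[OF u] and ag = agree_facts[OF st[of k]]
    have "R (xs (Suc k)) \<le> rho * R (xs k)" using sa ag by simp
    also have "\<dots> \<le> rho * (rho^k * R (xs 0))" using Suc rho_facts by (intro mult_left_mono) auto
    finally show ?case using sa ag by simp
  qed
  define R0 where "R0 = R (xs 0)"
  have R0nn: "0 \<le> R0" using T_nn b0 by (simp add: R0_def R_def)
  define C where "C = 2 / (s 1)\<^sup>2 * sqrt (R0\<^sup>2 + 16 * R0)"
  have diff: "\<bar>xs (Suc k) i - xs k i\<bar> \<le> C * (sqrt rho)^k" if i: "i < n" for k i
  proof -
    have u: "ip (xs k) (xs k) = 1" "0 < bw (xs k) 0" using inv by auto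
    have Rk: "0 \<le> R (xs k)" "R (xs k) \<le> rho^k * R0" using inv[of k] T_nn u(2) by (auto simp: R_def R0_def)
    have "\<bar>xs (Suc k) i - xs k i\<bar> \<le> L2_set (\<lambda>i. \<bar>xs (Suc k) i - xs k i\<bar>) {0..<n}"
      using i by (intro member_le_L2_set) auto
    also have "\<dots> = L2_set (\<lambda>i. F (xs k) i - xs k i) {0..<n}"
      using st[of k] by (simp add: L2_set_def)
    also have "\<dots> \<le> 2 / (s 1)\<^sup>2 * sqrt ((R (xs k))\<^sup>2 + 16 * R (xs k))"
      by (rule step_analysis(4)[OF u])
    also have "\<dots> \<le> 2 / (s 1)\<^sup>2 * sqrt (rho^k * (R0\<^sup>2 + 16 * R0))"
    proof -
      have rk: "0 \<le> rho^k" "rho^k \<le> 1" using rho_facts by (auto intro: power_le_one)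
      have "(R (xs k))\<^sup>2 \<le> (rho^k * R0)\<^sup>2" using Rk by (intro power_mono) auto
      also have "\<dots> = rho^k * (rho^k * R0\<^sup>2)" by (simp add: power2_eq_square)
      also have "\<dots> \<le> rho^k * R0\<^sup>2" using rk by (intro mult_left_le_one_le mult_nonneg_nonneg) auto
      finally have "(R (xs k))\<^sup>2 + 16 * R (xs k) \<le> rho^k * (R0\<^sup>2 + 16 * R0)"
        using Rk by (simp add: algebra_simps)
      then show ?thesis using s1_facts by (intro mult_left_mono real_sqrt_le_mono) auto
    qed
    also have "\<dots> = C * (sqrt rho)^k"
      using rho_facts by (simp add: C_def real_sqrt_mult real_sqrt_power)
    finally show ?thesis .
  qed
  fix i assume "i < n"
  show "convergent (\<lambda>k. xs k i)"
    by (rule geo_conv[of _ C "sqrt rho"]) (use diff \<open>i < n\<close> rho_facts in auto)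
qed

end




theorem theorem4p8:
  fixes m n :: nat and c s :: "nat \<Rightarrow> real" and t :: bool and v0 :: "real vec"
  assumes "m \<ge> 1"
    and "n = 2 * m + (if t then 1 else 0)"
    and "\<forall>j\<in>{1..m}. (c j)\<^sup>2 + (s j)\<^sup>2 = 1"
    and "\<forall>j\<in>{1..m}. s j \<noteq> 0"
    and "0 < c 1"
    and "\<forall>j\<in>{1..<m}. c j < c (Suc j)"
    and "c m < 1"
    and "v0 \<in> carrier_vec n"
    and "vnorm v0 = 1"
    and "grade (rot_block_mat m c s t) v0 \<ge> 2"
    and "v0 $ 0 \<noteq> 0 \<or> v0 $ 1 \<noteq> 0"
  shows "\<exists>L \<in> carrier_vec n. \<forall>i<n.
           (\<lambda>k. aci (rot_block_mat m c s t) v0 k $ i) \<longlonglongrightarrow> L $ i"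
proof -
  interpret aci_setup m n c s t
    using assms(1-7) by unfold_locales auto
  define xs where "xs k = (\<lambda>i. aci A v0 k $ i)" for k
  have sucs: "aci A v0 (Suc k) = aci_step A (aci A v0 k)" for k by (simp add: aci_def)
  have car: "aci A v0 k \<in> carrier_vec n" for k
  proof (induction k)
    case 0 then show ?case using assms(8) by (simp add: aci_def)
  next
    case (Suc k) then show ?case by (simp add: sucs step_vec)
  qed
  have st: "\<forall>i<n. xs (Suc k) i = F (xs k) i" for k
  proof -
    have "(($) (aci A v0 k)) = xs k" by (simp add: xs_def fun_eq_iff)
    then show ?thesis using step_vec[OF car[of k]] by (simp add: xs_def sucs)
  qed
  have x0: "xs 0 = (($) v0)" by (simp add: xs_def aci_def fun_eq_iff)
  have "nrm (xs 0) = 1" using vnorm_vec[OF assms(8), of "xs 0"] assms(9) x0 by simp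
  then have u0: "ip (xs 0) (xs 0) = 1" by (simp add: nrm_def)
  have b0: "0 < bw (xs 0) 0" using assms(11) x0 by (auto simp: bw_def add_pos_nonneg add_nonneg_pos)
  have conv: "convergent (\<lambda>k. xs k i)" if "i < n" for i
    using seq_conv[OF st u0 b0 that] .
  show ?thesis
  proof (intro bexI[of _ "vec n (\<lambda>i. lim (\<lambda>k. xs k i))"] allI impI)
    fix i assume i: "i < n"
    show "(\<lambda>k. aci A v0 k $ i) \<longlonglongrightarrow> vec n (\<lambda>i. lim (\<lambda>k. xs k i)) $ i"
      using conv[OF i] i by (simp add: convergent_LIMSEQ_iff xs_def)
  qed simp
qed


end
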